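(* Let $X$ be a schematic finite space. Then $X$ is well-connected if and only if it is top-connected and pw-connected.
   Context: Finite ringed space: finite $T_0$ space $X$ (poset, $x\le x'$ iff $x'\in U_x$, $U_x$ minimal open containing $x$) with sheaf of commutative rings $\mathcal O_X$, Noetherian stalks $\mathcal O_{X,x}=\mathcal O_X(U_x)$, restrictions $r_{xx'}$. Finite space: all $r_{xx'}$ flat. $X$ is schematic if for all $i\ge0$, $x\le x'$, $y\le y'$ the maps $H^i(U_x\cap U_y,\mathcal O_X)\otimes_{\mathcal O_{X,x}}\mathcal O_{X,x'}\to H^i(U_{x'}\cap U_y,\mathcal O_X)$ and $H^i(U_x\cap U_y,\mathcal O_X)\otimes_{\mathcal O_{X,y}}\mathcal O_{X,y'}\to H^i(U_x\cap U_{y'},\mathcal O_X)$ are isomorphisms. $X$ is top-connected if its underlying poset (topological space) is connected; connected if $\mathrm{Spec}(\mathcal O_X(X))$ is connected (the empty space is not connected); pw-connected if $\mathrm{Spec}(\mathcal O_{X,x})$ is connected (and non-empty) for every $x\in X$; well-connected if connected and pw-connected. *)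

theory Defs
  imports "HOL-Algebra.Algebra" "HOL-Analysis.Abstract_Topology"
begin

text \<open>A finite T0 space is the same as a finite poset (x \<le> x' iff x' lies in the minimal
open set U_x).  A sheaf of rings on it is the same as the data of its stalks
O_x = O(U_x) together with the restriction maps r_{x x'} for x \<le> x', functorially.\<close>

record ('a, 'r) ringed_poset =
  pts   :: "'a set"
  leq   :: "'a \<Rightarrow> 'a \<Rightarrow> bool"
  stalk :: "'a \<Rightarrow> 'r ring"
  rmap  :: "'a \<Rightarrow> 'a \<Rightarrow> 'r \<Rightarrow> 'r"

definition min_open :: "('a, 'r) ringed_poset \<Rightarrow> 'a \<Rightarrow> 'a set" where
  "min_open S x = {y \<in> pts S. leq S x y}"

definition space_topology :: "('a, 'r) ringed_poset \<Rightarrow> 'a topology" where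
  "space_topology S =
     topology (\<lambda>V. V \<subseteq> pts S \<and> (\<forall>x\<in>V. \<forall>y\<in>pts S. leq S x y \<longrightarrow> y \<in> V))"

definition finite_ringed_space :: "('a, 'r) ringed_poset \<Rightarrow> bool" where
  "finite_ringed_space S \<longleftrightarrow>
     finite (pts S) \<and>
     (\<forall>x\<in>pts S. leq S x x) \<and>
     (\<forall>x\<in>pts S. \<forall>y\<in>pts S. leq S x y \<and> leq S y x \<longrightarrow> x = y) \<and>
     (\<forall>x\<in>pts S. \<forall>y\<in>pts S. \<forall>z\<in>pts S. leq S x y \<and> leq S y z \<longrightarrow> leq S x z) \<and>
     (\<forall>x\<in>pts S. cring (stalk S x) \<and> noetherian_ring (stalk S x)) \<and>
     (\<forall>x\<in>pts S. \<forall>y\<in>pts S. leq S x y \<longrightarrow> rmap S x y \<in> ring_hom (stalk S x) (stalk S y)) \<and>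
     (\<forall>x\<in>pts S. \<forall>a\<in>carrier (stalk S x). rmap S x x a = a) \<and>
     (\<forall>x\<in>pts S. \<forall>y\<in>pts S. \<forall>z\<in>pts S. leq S x y \<and> leq S y z \<longrightarrow>
        (\<forall>a\<in>carrier (stalk S x). rmap S y z (rmap S x y a) = rmap S x z a))"

definition sections :: "('a, 'r) ringed_poset \<Rightarrow> 'a set \<Rightarrow> ('a \<Rightarrow> 'r) ring" where
  "sections S V =
    \<lparr> partial_object.carrier = {s. (\<forall>x\<in>V. s x \<in> carrier (stalk S x)) \<and>
                    (\<forall>x\<in>V. \<forall>y\<in>V. leq S x y \<longrightarrow> rmap S x y (s x) = s y) \<and>
                    (\<forall>x. x \<notin> V \<longrightarrow> s x = undefined)},
      monoid.mult = (\<lambda>s t. \<lambda>x. if x \<in> V then s x \<otimes>\<^bsub>stalk S x\<^esub> t x else undefined),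
      monoid.one = (\<lambda>x. if x \<in> V then \<one>\<^bsub>stalk S x\<^esub> else undefined),
      ring.zero = (\<lambda>x. if x \<in> V then \<zero>\<^bsub>stalk S x\<^esub> else undefined),
      ring.add = (\<lambda>s t. \<lambda>x. if x \<in> V then s x \<oplus>\<^bsub>stalk S x\<^esub> t x else undefined) \<rparr>"

definition Spec :: "('b, 'm) ring_scheme \<Rightarrow> 'b set set" where
  "Spec R = {P. primeideal P R}"

definition zariski :: "('b, 'm) ring_scheme \<Rightarrow> 'b set topology" where
  "zariski R = topology_generated_by {{P \<in> Spec R. a \<notin> P} | a. a \<in> carrier R}"

text \<open>Spec(R) is connected; the empty space is not considered connected.\<close>
definition spec_connected :: "('b, 'm) ring_scheme \<Rightarrow> bool" where
  "spec_connected R \<longleftrightarrow> Spec R \<noteq> {} \<and> connected_space (zariski R)"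

definition top_connected :: "('a, 'r) ringed_poset \<Rightarrow> bool" where
  "top_connected S \<longleftrightarrow> pts S \<noteq> {} \<and> connected_space (space_topology S)"

definition connected_rs :: "('a, 'r) ringed_poset \<Rightarrow> bool" where
  "connected_rs S \<longleftrightarrow> spec_connected (sections S (pts S))"

definition pw_connected :: "('a, 'r) ringed_poset \<Rightarrow> bool" where
  "pw_connected S \<longleftrightarrow> (\<forall>x\<in>pts S. spec_connected (stalk S x))"

definition well_connected :: "('a, 'r) ringed_poset \<Rightarrow> bool" where
  "well_connected S \<longleftrightarrow> connected_rs S \<and> pw_connected S"

text \<open>For an A-module M, a ring map f : A \<rightarrow> B, a B-module N and a map phi : M \<rightarrow> N,
the induced map M \<otimes>_A B \<rightarrow> N, m \<otimes> b \<mapsto> b phi(m).  The tensor product is realised as the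
free abelian group on carrier M \<times> carrier B modulo the subgroup generated by the
bilinearity / balancing relations.\<close>

definition delta :: "'p \<Rightarrow> 'p \<Rightarrow> int" where
  "delta q = (\<lambda>p. if p = q then 1 else 0)"

definition free_elems :: "('s, 'm) module \<Rightarrow> 't ring \<Rightarrow> ('m \<times> 't \<Rightarrow> int) set" where
  "free_elems M B = {c. finite {p. c p \<noteq> 0} \<and> {p. c p \<noteq> 0} \<subseteq> carrier M \<times> carrier B}"

definition tensor_rels ::
  "'s ring \<Rightarrow> ('s, 'm) module \<Rightarrow> ('s \<Rightarrow> 't) \<Rightarrow> 't ring \<Rightarrow> ('m \<times> 't \<Rightarrow> int) set" where
  "tensor_rels A M f B =
     {\<lambda>p. delta (m \<oplus>\<^bsub>M\<^esub> m', b) p - delta (m, b) p - delta (m', b) p | m m' b.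
        m \<in> carrier M \<and> m' \<in> carrier M \<and> b \<in> carrier B}
   \<union> {\<lambda>p. delta (m, b \<oplus>\<^bsub>B\<^esub> b') p - delta (m, b) p - delta (m, b') p | m b b'.
        m \<in> carrier M \<and> b \<in> carrier B \<and> b' \<in> carrier B}
   \<union> {\<lambda>p. delta (a \<odot>\<^bsub>M\<^esub> m, b) p - delta (m, f a \<otimes>\<^bsub>B\<^esub> b) p | a m b.
        a \<in> carrier A \<and> m \<in> carrier M \<and> b \<in> carrier B}"

inductive_set tensor_null ::
  "'s ring \<Rightarrow> ('s, 'm) module \<Rightarrow> ('s \<Rightarrow> 't) \<Rightarrow> 't ring \<Rightarrow> ('m \<times> 't \<Rightarrow> int) set"
  for A M f B where
  zero: "(\<lambda>p. 0) \<in> tensor_null A M f B"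
| step: "c \<in> tensor_null A M f B \<Longrightarrow> g \<in> tensor_rels A M f B \<Longrightarrow>
         (\<lambda>p. c p + k * g p) \<in> tensor_null A M f B"

definition tensor_lin :: "('t, 'n) module \<Rightarrow> ('m \<Rightarrow> 'n) \<Rightarrow> ('m \<times> 't \<Rightarrow> int) \<Rightarrow> 'n" where
  "tensor_lin N phi c = finsum N (\<lambda>p. [c p] \<cdot>\<^bsub>N\<^esub> (snd p \<odot>\<^bsub>N\<^esub> phi (fst p))) {p. c p \<noteq> 0}"

definition tensor_map_inj ::
  "'s ring \<Rightarrow> ('s, 'm) module \<Rightarrow> ('s \<Rightarrow> 't) \<Rightarrow> 't ring \<Rightarrow> ('t, 'n) module \<Rightarrow> ('m \<Rightarrow> 'n) \<Rightarrow> bool" where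
  "tensor_map_inj A M f B N phi \<longleftrightarrow>
     (\<forall>c\<in>free_elems M B. tensor_lin N phi c = \<zero>\<^bsub>N\<^esub> \<longrightarrow> c \<in> tensor_null A M f B)"

definition tensor_map_surj ::
  "('s, 'm) module \<Rightarrow> 't ring \<Rightarrow> ('t, 'n) module \<Rightarrow> ('m \<Rightarrow> 'n) \<Rightarrow> bool" where
  "tensor_map_surj M B N phi \<longleftrightarrow> (\<forall>n\<in>carrier N. \<exists>c\<in>free_elems M B. tensor_lin N phi c = n)"

definition base_change_iso ::
  "'s ring \<Rightarrow> ('s, 'm) module \<Rightarrow> ('s \<Rightarrow> 't) \<Rightarrow> 't ring \<Rightarrow> ('t, 'n) module \<Rightarrow> ('m \<Rightarrow> 'n) \<Rightarrow> bool" where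
  "base_change_iso A M f B N phi \<longleftrightarrow>
     tensor_map_inj A M f B N phi \<and> tensor_map_surj M B N phi"

definition ideal_module :: "'s ring \<Rightarrow> 's set \<Rightarrow> ('s, 's) module" where
  "ideal_module A I = \<lparr> partial_object.carrier = I, monoid.mult = monoid.mult A, monoid.one = monoid.one A, ring.zero = ring.zero A, ring.add = ring.add A,
                        module.smult = monoid.mult A \<rparr>"

definition self_module :: "'t ring \<Rightarrow> ('t, 't) module" where
  "self_module B = \<lparr> partial_object.carrier = carrier B, monoid.mult = monoid.mult B, monoid.one = monoid.one B, ring.zero = ring.zero B, ring.add = ring.add B,
                      module.smult = monoid.mult B \<rparr>"

definition flat_hom :: "'s ring \<Rightarrow> 't ring \<Rightarrow> ('s \<Rightarrow> 't) \<Rightarrow> bool" where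
  "flat_hom A B f \<longleftrightarrow>
     (\<forall>I. ideal I A \<longrightarrow> tensor_map_inj A (ideal_module A I) f B (self_module B) f)"

definition finite_space :: "('a, 'r) ringed_poset \<Rightarrow> bool" where
  "finite_space S \<longleftrightarrow> finite_ringed_space S \<and>
     (\<forall>x\<in>pts S. \<forall>y\<in>pts S. leq S x y \<longrightarrow> flat_hom (stalk S x) (stalk S y) (rmap S x y))"

text \<open>C^n(V, O) = product over chains x_0 < ... < x_n in V of O_{x_n}.\<close>
definition chains :: "('a, 'r) ringed_poset \<Rightarrow> 'a set \<Rightarrow> nat \<Rightarrow> 'a list set" where
  "chains S V n = {xs. length xs = Suc n \<and> set xs \<subseteq> V \<and> sorted_wrt (\<lambda>x y. leq S x y \<and> x \<noteq> y) xs}"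

definition cochains :: "('a, 'r) ringed_poset \<Rightarrow> 'a set \<Rightarrow> nat \<Rightarrow> ('a list \<Rightarrow> 'r) set" where
  "cochains S V n = {s. (\<forall>xs\<in>chains S V n. s xs \<in> carrier (stalk S (last xs))) \<and>
                        (\<forall>xs. xs \<notin> chains S V n \<longrightarrow> s xs = undefined)}"

definition cochain_zero :: "('a, 'r) ringed_poset \<Rightarrow> 'a set \<Rightarrow> nat \<Rightarrow> 'a list \<Rightarrow> 'r" where
  "cochain_zero S V n = (\<lambda>xs. if xs \<in> chains S V n then \<zero>\<^bsub>stalk S (last xs)\<^esub> else undefined)"

definition cochain_add ::
  "('a, 'r) ringed_poset \<Rightarrow> 'a set \<Rightarrow> nat \<Rightarrow> ('a list \<Rightarrow> 'r) \<Rightarrow> ('a list \<Rightarrow> 'r) \<Rightarrow> 'a list \<Rightarrow> 'r" where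
  "cochain_add S V n s t =
     (\<lambda>xs. if xs \<in> chains S V n then s xs \<oplus>\<^bsub>stalk S (last xs)\<^esub> t xs else undefined)"

definition cochain_neg ::
  "('a, 'r) ringed_poset \<Rightarrow> 'a set \<Rightarrow> nat \<Rightarrow> ('a list \<Rightarrow> 'r) \<Rightarrow> 'a list \<Rightarrow> 'r" where
  "cochain_neg S V n s =
     (\<lambda>xs. if xs \<in> chains S V n then \<ominus>\<^bsub>stalk S (last xs)\<^esub> s xs else undefined)"

text \<open>Action of O_x on cochains over V \<subseteq> U_x (through O_x \<rightarrow> O(V)).\<close>
definition cochain_smult ::
  "('a, 'r) ringed_poset \<Rightarrow> 'a set \<Rightarrow> nat \<Rightarrow> 'a \<Rightarrow> 'r \<Rightarrow> ('a list \<Rightarrow> 'r) \<Rightarrow> 'a list \<Rightarrow> 'r" where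
  "cochain_smult S V n x a s =
     (\<lambda>xs. if xs \<in> chains S V n then rmap S x (last xs) a \<otimes>\<^bsub>stalk S (last xs)\<^esub> s xs else undefined)"

definition del_nth :: "nat \<Rightarrow> 'a list \<Rightarrow> 'a list" where
  "del_nth i xs = take i xs @ drop (Suc i) xs"

definition sign_el :: "('b, 'm) ring_scheme \<Rightarrow> nat \<Rightarrow> 'b \<Rightarrow> 'b" where
  "sign_el R i a = (if even i then a else \<ominus>\<^bsub>R\<^esub> a)"

definition coboundary ::
  "('a, 'r) ringed_poset \<Rightarrow> 'a set \<Rightarrow> nat \<Rightarrow> ('a list \<Rightarrow> 'r) \<Rightarrow> 'a list \<Rightarrow> 'r" where
  "coboundary S V n s =
     (\<lambda>xs. if xs \<in> chains S V (Suc n) then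
        finsum (stalk S (last xs))
          (\<lambda>i. if i \<le> n then sign_el (stalk S (last xs)) i (s (del_nth i xs))
               else sign_el (stalk S (last xs)) (Suc n)
                      (rmap S (xs ! n) (xs ! Suc n) (s (take (Suc n) xs))))
          {0..Suc n}
      else undefined)"

definition cocycles :: "('a, 'r) ringed_poset \<Rightarrow> 'a set \<Rightarrow> nat \<Rightarrow> ('a list \<Rightarrow> 'r) set" where
  "cocycles S V n = {s \<in> cochains S V n. coboundary S V n s = cochain_zero S V (Suc n)}"

definition coboundaries :: "('a, 'r) ringed_poset \<Rightarrow> 'a set \<Rightarrow> nat \<Rightarrow> ('a list \<Rightarrow> 'r) set" where
  "coboundaries S V n =
     (case n of 0 \<Rightarrow> {cochain_zero S V 0} | Suc m \<Rightarrow> coboundary S V m ` cochains S V m)"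

definition cohom_class ::
  "('a, 'r) ringed_poset \<Rightarrow> 'a set \<Rightarrow> nat \<Rightarrow> ('a list \<Rightarrow> 'r) \<Rightarrow> ('a list \<Rightarrow> 'r) set" where
  "cohom_class S V n s =
     {t \<in> cocycles S V n. cochain_add S V n t (cochain_neg S V n s) \<in> coboundaries S V n}"

definition cohom_rep :: "('a list \<Rightarrow> 'r) set \<Rightarrow> 'a list \<Rightarrow> 'r" where
  "cohom_rep C = (SOME s. s \<in> C)"

text \<open>H^n(V, O_X) for V \<subseteq> U_x open, as a module over O_x.\<close>
definition cohom ::
  "('a, 'r) ringed_poset \<Rightarrow> 'a \<Rightarrow> 'a set \<Rightarrow> nat \<Rightarrow> ('r, ('a list \<Rightarrow> 'r) set) module" where
  "cohom S x V n =
    \<lparr> partial_object.carrier = cohom_class S V n ` cocycles S V n,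
      monoid.mult = (\<lambda>_ _. undefined), monoid.one = undefined,
      ring.zero = cohom_class S V n (cochain_zero S V n),
      ring.add = (\<lambda>C D. cohom_class S V n (cochain_add S V n (cohom_rep C) (cohom_rep D))),
      module.smult = (\<lambda>a C. cohom_class S V n (cochain_smult S V n x a (cohom_rep C))) \<rparr>"

definition cohom_restr ::
  "('a, 'r) ringed_poset \<Rightarrow> 'a set \<Rightarrow> nat \<Rightarrow> ('a list \<Rightarrow> 'r) set \<Rightarrow> ('a list \<Rightarrow> 'r) set" where
  "cohom_restr S V' n C =
     cohom_class S V' n (\<lambda>xs. if xs \<in> chains S V' n then cohom_rep C xs else undefined)"

definition schematic :: "('a, 'r) ringed_poset \<Rightarrow> bool" where
  "schematic S \<longleftrightarrow>
     (\<forall>i x x' y y'. x \<in> pts S \<and> x' \<in> pts S \<and> y \<in> pts S \<and> y' \<in> pts S \<and>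
        leq S x x' \<and> leq S y y' \<longrightarrow>
        base_change_iso (stalk S x) (cohom S x (min_open S x \<inter> min_open S y) i)
           (rmap S x x') (stalk S x') (cohom S x' (min_open S x' \<inter> min_open S y) i)
           (cohom_restr S (min_open S x' \<inter> min_open S y) i) \<and>
        base_change_iso (stalk S y) (cohom S y (min_open S x \<inter> min_open S y) i)
           (rmap S y y') (stalk S y') (cohom S y' (min_open S x \<inter> min_open S y') i)
           (cohom_restr S (min_open S x \<inter> min_open S y') i))"

end

theory Submission
  imports Defs
begin

lemma set_add_memI:
  fixes G (structure)
  shows "h \<in> H \<Longrightarrow> k \<in> K \<Longrightarrow> h \<oplus> k \<in> H <+> K"
  unfolding set_add_def' by blast

lemma set_add_memE:
  fixes G (structure)
  shows "x \<in> H <+> K \<Longrightarrow> \<exists>h\<in>H. \<exists>k\<in>K. x = h \<oplus> k"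
  unfolding set_add_def' by blast

lemma PIdl_memI:
  fixes G (structure)
  shows "r \<in> carrier G \<Longrightarrow> r \<otimes> b \<in> PIdl b"
  unfolding cgenideal_def by blast

lemma PIdl_memE:
  fixes G (structure)
  shows "x \<in> PIdl b \<Longrightarrow> \<exists>r\<in>carrier G. x = r \<otimes> b"
  unfolding cgenideal_def by blast

lemma prime_pullback:
  assumes A: "cring A" and B: "cring B" and h: "h \<in> ring_hom A B" and Q: "primeideal Q B"
  shows "primeideal {a \<in> carrier A. h a \<in> Q} A"
proof -
  interpret A: cring A by fact
  interpret B: cring B by fact
  interpret Q: primeideal Q B by fact
  interpret hh: ring_hom_cring A B h using A B h by (simp add: ring_hom_cring.intro ring_hom_cring_axioms.intro)
  show ?thesis
  proof (rule primeidealI[OF _ A])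
    show "ideal {a \<in> carrier A. h a \<in> Q} A"
    proof (rule idealI[OF A.ring_axioms])
      show "subgroup {a \<in> carrier A. h a \<in> Q} (add_monoid A)"
        by (rule subgroup.intro) (auto simp: Q.a_closed Q.a_inv_closed a_inv_def[symmetric])
    qed (auto simp: Q.I_l_closed Q.I_r_closed)
    show "carrier A \<noteq> {a \<in> carrier A. h a \<in> Q}"
    proof
      assume "carrier A = {a \<in> carrier A. h a \<in> Q}"
      then have "h \<one>\<^bsub>A\<^esub> \<in> Q" using A.one_closed by blast
      then show False using Q.I_notcarr Q.one_imp_carrier by simp
    qed
    show "a \<in> {a \<in> carrier A. h a \<in> Q} \<or> b \<in> {a \<in> carrier A. h a \<in> Q}"
      if "a \<in> carrier A" "b \<in> carrier A" "a \<otimes>\<^bsub>A\<^esub> b \<in> {a \<in> carrier A. h a \<in> Q}" for a b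
      using that Q.I_prime by auto
  qed
qed

lemma exists_prime_avoiding:
  fixes R (structure)
  assumes R: "cring R" and a: "a \<in> carrier R" and nn: "\<And>n::nat. a [^]\<^bsub>R\<^esub> n \<noteq> \<zero>\<^bsub>R\<^esub>"
  shows "\<exists>P. primeideal P R \<and> a \<notin> P"
proof -
  interpret cring R by fact
  define F where "F = {I. ideal I R \<and> (\<forall>n::nat. a [^] n \<notin> I)}"
  have z: "{\<zero>} \<in> F" unfolding F_def using nn zeroideal by auto
  have "\<exists>M\<in>F. \<forall>Y\<in>F. M \<subseteq> Y \<longrightarrow> Y = M"
  proof (rule subset_Zorn_nonempty)
    show "F \<noteq> {}" using z by auto
    fix C assume "C \<noteq> {}" "subset.chain F C"
    then have ch: "subset.chain {I. ideal I R} C" unfolding F_def pred_on.chain_def by auto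
    have "ideal (\<Union>C) R" using chain_Union_is_ideal[OF ch] \<open>C \<noteq> {}\<close> by simp
    moreover have "\<forall>n::nat. a [^] n \<notin> \<Union>C" using \<open>subset.chain F C\<close> unfolding F_def pred_on.chain_def by auto
    ultimately show "\<Union>C \<in> F" unfolding F_def by auto
  qed
  then obtain M where MF: "M \<in> F" and Mmax: "\<And>Y. Y \<in> F \<Longrightarrow> M \<subseteq> Y \<Longrightarrow> Y = M" by blast
  interpret M: ideal M R using MF unfolding F_def by auto
  have avoid: "\<And>n::nat. a [^] n \<notin> M" using MF unfolding F_def by auto
  have ext: "\<exists>n::nat. \<exists>m\<in>M. \<exists>r\<in>carrier R. a [^] n = m \<oplus> r \<otimes> b" if b: "b \<in> carrier R" "b \<notin> M" for b
  proof -
    have J: "ideal (M <+> PIdl b) R" by (rule add_ideals[OF M.is_ideal cgenideal_ideal[OF b(1)]])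
    have sub: "M \<subseteq> M <+> PIdl b"
    proof
      fix m assume "m \<in> M"
      then have "m = m \<oplus> \<zero> \<otimes> b" using b M.a_subset by auto
      then show "m \<in> M <+> PIdl b" using \<open>m \<in> M\<close> b by (metis set_add_memI PIdl_memI zero_closed)
    qed
    have "b \<in> M <+> PIdl b"
    proof -
      have "b = \<zero> \<oplus> \<one> \<otimes> b" using b by auto
      then show ?thesis using b M.additive_subgroup_axioms by (metis set_add_memI PIdl_memI one_closed additive_subgroup.zero_closed)
    qed
    then have "M <+> PIdl b \<noteq> M" using b by auto
    then have "M <+> PIdl b \<notin> F" using Mmax sub by auto
    then obtain n::nat where "a [^] n \<in> M <+> PIdl b" using J unfolding F_def by auto
    then show ?thesis by (metis set_add_memE PIdl_memE)
  qed
  have "primeideal M R"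
  proof (rule primeidealI[OF M.is_ideal R])
    show "carrier R \<noteq> M" using avoid[of 0] by auto
    fix b c assume b: "b \<in> carrier R" and c: "c \<in> carrier R" and bc: "b \<otimes> c \<in> M"
    show "b \<in> M \<or> c \<in> M"
    proof (rule ccontr)
      assume "\<not> (b \<in> M \<or> c \<in> M)"
      then obtain n1 m1 r1 n2 m2 r2 where
        m1: "m1 \<in> M" "r1 \<in> carrier R" "a [^] (n1::nat) = m1 \<oplus> r1 \<otimes> b" and
        m2: "m2 \<in> M" "r2 \<in> carrier R" "a [^] (n2::nat) = m2 \<oplus> r2 \<otimes> c"
        using ext b c by meson
      have m1c: "m1 \<in> carrier R" and m2c: "m2 \<in> carrier R" using m1 m2 M.a_subset by auto
      have "a [^] (n1 + n2) = a [^] n1 \<otimes> a [^] n2"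
        using a by (simp add: nat_pow_mult)
      also have "\<dots> = (m1 \<oplus> r1 \<otimes> b) \<otimes> (m2 \<oplus> r2 \<otimes> c)"
        using m1 m2 by simp
      also have "\<dots> = m1 \<otimes> (m2 \<oplus> r2 \<otimes> c) \<oplus> (r1 \<otimes> b \<otimes> m2 \<oplus> (r1 \<otimes> r2) \<otimes> (b \<otimes> c))"
        using m1c m2c b c m1 m2 by algebra
      also have "\<dots> \<in> M"
        using m1 m2 m1c m2c b c bc
        by (intro M.a_closed M.I_r_closed[OF m1(1)] M.I_l_closed[OF m2(1)] M.I_l_closed[OF bc]) auto
      finally show False using avoid by blast
    qed
  qed
  then show ?thesis using avoid[of 1] a by auto
qed

lemma sec_carrier: "s \<in> carrier (sections S V) \<longleftrightarrow> (\<forall>x\<in>V. s x \<in> carrier (stalk S x)) \<and>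
                    (\<forall>x\<in>V. \<forall>y\<in>V. leq S x y \<longrightarrow> rmap S x y (s x) = s y) \<and>
                    (\<forall>x. x \<notin> V \<longrightarrow> s x = undefined)"
  by (simp add: sections_def)
lemma sec_add: "s \<oplus>\<^bsub>sections S V\<^esub> t = (\<lambda>x. if x \<in> V then s x \<oplus>\<^bsub>stalk S x\<^esub> t x else undefined)"
  by (simp add: sections_def)
lemma sec_mult: "s \<otimes>\<^bsub>sections S V\<^esub> t = (\<lambda>x. if x \<in> V then s x \<otimes>\<^bsub>stalk S x\<^esub> t x else undefined)"
  by (simp add: sections_def)
lemma sec_one: "\<one>\<^bsub>sections S V\<^esub> = (\<lambda>x. if x \<in> V then \<one>\<^bsub>stalk S x\<^esub> else undefined)"
  by (simp add: sections_def)
lemma sec_zero: "\<zero>\<^bsub>sections S V\<^esub> = (\<lambda>x. if x \<in> V then \<zero>\<^bsub>stalk S x\<^esub> else undefined)"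
  by (simp add: sections_def)

lemma hom_neg:
  assumes "cring R" "cring T" "h \<in> ring_hom R T" "a \<in> carrier R"
  shows "h (\<ominus>\<^bsub>R\<^esub> a) = \<ominus>\<^bsub>T\<^esub> h a"
proof -
  interpret ring_hom_cring R T h using assms
    by (simp add: ring_hom_cring.intro ring_hom_cring_axioms.intro)
  show ?thesis using assms(4) by (rule hom_a_inv)
qed

lemma frs_finite: "finite_ringed_space S \<Longrightarrow> finite (pts S)"
  unfolding finite_ringed_space_def by (elim conjE) assumption
lemma frs_refl': "finite_ringed_space S \<Longrightarrow> \<forall>x\<in>pts S. leq S x x"
  unfolding finite_ringed_space_def by (elim conjE) assumption
lemma frs_antisym': "finite_ringed_space S \<Longrightarrow> \<forall>x\<in>pts S. \<forall>y\<in>pts S. leq S x y \<and> leq S y x \<longrightarrow> x = y"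
  unfolding finite_ringed_space_def by (elim conjE) assumption
lemma frs_trans': "finite_ringed_space S \<Longrightarrow> \<forall>x\<in>pts S. \<forall>y\<in>pts S. \<forall>z\<in>pts S. leq S x y \<and> leq S y z \<longrightarrow> leq S x z"
  unfolding finite_ringed_space_def by (elim conjE) assumption
lemma frs_ring': "finite_ringed_space S \<Longrightarrow> \<forall>x\<in>pts S. cring (stalk S x) \<and> noetherian_ring (stalk S x)"
  unfolding finite_ringed_space_def by (elim conjE) assumption
lemma frs_hom': "finite_ringed_space S \<Longrightarrow> \<forall>x\<in>pts S. \<forall>y\<in>pts S. leq S x y \<longrightarrow> rmap S x y \<in> ring_hom (stalk S x) (stalk S y)"
  unfolding finite_ringed_space_def by (elim conjE) assumption
lemma frs_id': "finite_ringed_space S \<Longrightarrow> \<forall>x\<in>pts S. \<forall>a\<in>carrier (stalk S x). rmap S x x a = a"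
  unfolding finite_ringed_space_def by (elim conjE) assumption
lemma frs_comp': "finite_ringed_space S \<Longrightarrow> \<forall>x\<in>pts S. \<forall>y\<in>pts S. \<forall>z\<in>pts S. leq S x y \<and> leq S y z \<longrightarrow>
        (\<forall>a\<in>carrier (stalk S x). rmap S y z (rmap S x y a) = rmap S x z a)"
  unfolding finite_ringed_space_def by (elim conjE) assumption

lemma frs_cring: "finite_ringed_space S \<Longrightarrow> x \<in> pts S \<Longrightarrow> cring (stalk S x)"
  using frs_ring' by blast
lemma frs_hom: "finite_ringed_space S \<Longrightarrow> x \<in> pts S \<Longrightarrow> y \<in> pts S \<Longrightarrow> leq S x y \<Longrightarrow>
   rmap S x y \<in> ring_hom (stalk S x) (stalk S y)"
  using frs_hom' by blast
lemma frs_refl: "finite_ringed_space S \<Longrightarrow> x \<in> pts S \<Longrightarrow> leq S x x"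
  using frs_refl' by blast
lemma frs_antisym: "finite_ringed_space S \<Longrightarrow> x \<in> pts S \<Longrightarrow> y \<in> pts S \<Longrightarrow> leq S x y \<Longrightarrow> leq S y x \<Longrightarrow> x = y"
  using frs_antisym' by blast
lemma frs_trans: "finite_ringed_space S \<Longrightarrow> x \<in> pts S \<Longrightarrow> y \<in> pts S \<Longrightarrow> z \<in> pts S \<Longrightarrow> leq S x y \<Longrightarrow> leq S y z \<Longrightarrow> leq S x z"
  using frs_trans' by blast
lemma frs_comp: "finite_ringed_space S \<Longrightarrow> x \<in> pts S \<Longrightarrow> y \<in> pts S \<Longrightarrow> z \<in> pts S \<Longrightarrow> leq S x y \<Longrightarrow> leq S y z \<Longrightarrow>
   a \<in> carrier (stalk S x) \<Longrightarrow> rmap S y z (rmap S x y a) = rmap S x z a"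
  using frs_comp' by blast

lemma sections_cring:
  assumes fr: "finite_ringed_space S" and V: "V \<subseteq> pts S"
  shows "cring (sections S V)"
proof -
  have cr: "\<And>x. x \<in> V \<Longrightarrow> cring (stalk S x)" by (rule frs_cring[OF fr subsetD[OF V]])
  have R: "\<And>x. x \<in> V \<Longrightarrow> ring (stalk S x)" by (rule cring.axioms(1)[OF cr])
  have hom: "\<And>x y. x \<in> V \<Longrightarrow> y \<in> V \<Longrightarrow> leq S x y \<Longrightarrow> rmap S x y \<in> ring_hom (stalk S x) (stalk S y)"
    by (rule frs_hom[OF fr subsetD[OF V] subsetD[OF V]])
  let ?A = "sections S V"
  have C: "s x \<in> carrier (stalk S x)" if "s \<in> carrier ?A" "x \<in> V" for s x
    using that by (simp add: sec_carrier)
  have Cr: "rmap S x y (s x) = s y" if "s \<in> carrier ?A" "x \<in> V" "y \<in> V" "leq S x y" for s x y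
    using that by (simp add: sec_carrier)
  have Cu: "s x = undefined" if "s \<in> carrier ?A" "x \<notin> V" for s x
    using that by (simp add: sec_carrier)
  have add_closed: "s \<oplus>\<^bsub>?A\<^esub> t \<in> carrier ?A" if s: "s \<in> carrier ?A" and t: "t \<in> carrier ?A" for s t
    unfolding sec_carrier
  proof (intro conjI ballI allI impI)
    fix x assume x: "x \<in> V"
    interpret cring "stalk S x" using cr x .
    show "(s \<oplus>\<^bsub>?A\<^esub> t) x \<in> carrier (stalk S x)" using C[OF s x] C[OF t x] x by (simp add: sec_add)
  next
    fix x y assume x: "x \<in> V" and y: "y \<in> V" and xy: "leq S x y"
    show "rmap S x y ((s \<oplus>\<^bsub>?A\<^esub> t) x) = (s \<oplus>\<^bsub>?A\<^esub> t) y"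
      using x y ring_hom_add[OF hom[OF x y xy] C[OF s x] C[OF t x]] Cr[OF s x y xy] Cr[OF t x y xy]
      by (simp add: sec_add)
  next
    fix x assume "x \<notin> V" then show "(s \<oplus>\<^bsub>?A\<^esub> t) x = undefined" by (simp add: sec_add)
  qed
  have mult_closed: "s \<otimes>\<^bsub>?A\<^esub> t \<in> carrier ?A" if s: "s \<in> carrier ?A" and t: "t \<in> carrier ?A" for s t
    unfolding sec_carrier
  proof (intro conjI ballI allI impI)
    fix x assume x: "x \<in> V"
    interpret cring "stalk S x" using cr x .
    show "(s \<otimes>\<^bsub>?A\<^esub> t) x \<in> carrier (stalk S x)" using C[OF s x] C[OF t x] x by (simp add: sec_mult)
  next
    fix x y assume x: "x \<in> V" and y: "y \<in> V" and xy: "leq S x y"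
    show "rmap S x y ((s \<otimes>\<^bsub>?A\<^esub> t) x) = (s \<otimes>\<^bsub>?A\<^esub> t) y"
      using x y ring_hom_mult[OF hom[OF x y xy] C[OF s x] C[OF t x]] Cr[OF s x y xy] Cr[OF t x y xy]
      by (simp add: sec_mult)
  next
    fix x assume "x \<notin> V" then show "(s \<otimes>\<^bsub>?A\<^esub> t) x = undefined" by (simp add: sec_mult)
  qed
  have neg_closed: "(\<lambda>x. if x \<in> V then \<ominus>\<^bsub>stalk S x\<^esub> s x else undefined) \<in> carrier ?A" if s: "s \<in> carrier ?A" for s
    unfolding sec_carrier
  proof (intro conjI ballI allI impI)
    fix x assume x: "x \<in> V"
    interpret cring "stalk S x" using cr x .
    show "(if x \<in> V then \<ominus>\<^bsub>stalk S x\<^esub> s x else undefined) \<in> carrier (stalk S x)" using C[OF s x] x by simp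
  next
    fix x y assume x: "x \<in> V" and y: "y \<in> V" and xy: "leq S x y"
    show "rmap S x y (if x \<in> V then \<ominus>\<^bsub>stalk S x\<^esub> s x else undefined) = (if y \<in> V then \<ominus>\<^bsub>stalk S y\<^esub> s y else undefined)"
      using x y hom_neg[OF cr[OF x] cr[OF y] hom[OF x y xy] C[OF s x]] Cr[OF s x y xy] by simp
  qed simp
  have zero_closed: "\<zero>\<^bsub>?A\<^esub> \<in> carrier ?A"
    unfolding sec_carrier
  proof (intro conjI ballI allI impI)
    fix x assume x: "x \<in> V"
    interpret cring "stalk S x" using cr x .
    show "\<zero>\<^bsub>?A\<^esub> x \<in> carrier (stalk S x)" using x by (simp add: sec_zero)
  next
    fix x y assume x: "x \<in> V" and y: "y \<in> V" and xy: "leq S x y"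
    show "rmap S x y (\<zero>\<^bsub>?A\<^esub> x) = \<zero>\<^bsub>?A\<^esub> y"
      using x y ring_hom_zero[OF hom[OF x y xy] R[OF x] R[OF y]] by (simp add: sec_zero)
  qed (simp add: sec_zero)
  have one_closed: "\<one>\<^bsub>?A\<^esub> \<in> carrier ?A"
    unfolding sec_carrier
  proof (intro conjI ballI allI impI)
    fix x assume x: "x \<in> V"
    interpret cring "stalk S x" using cr x .
    show "\<one>\<^bsub>?A\<^esub> x \<in> carrier (stalk S x)" using x by (simp add: sec_one)
  next
    fix x y assume x: "x \<in> V" and y: "y \<in> V" and xy: "leq S x y"
    show "rmap S x y (\<one>\<^bsub>?A\<^esub> x) = \<one>\<^bsub>?A\<^esub> y"
      using x y ring_hom_one[OF hom[OF x y xy]] by (simp add: sec_one)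
  qed (simp add: sec_one)
  have ext': "f = g" if "\<And>x. x \<in> V \<Longrightarrow> f x = g x" "\<And>x. x \<notin> V \<Longrightarrow> f x = g x" for f g :: "'a \<Rightarrow> 'b"
    using that by (metis ext)
  have ag: "abelian_group ?A"
  proof (rule abelian_groupI)
    fix s t z assume s: "s \<in> carrier ?A" and t: "t \<in> carrier ?A" and z: "z \<in> carrier ?A"
    show "s \<oplus>\<^bsub>?A\<^esub> t \<in> carrier ?A" by (rule add_closed[OF s t])
    show "s \<oplus>\<^bsub>?A\<^esub> t \<oplus>\<^bsub>?A\<^esub> z = s \<oplus>\<^bsub>?A\<^esub> (t \<oplus>\<^bsub>?A\<^esub> z)"
    proof (rule ext')
      fix x assume x: "x \<in> V"
      interpret cring "stalk S x" using cr x .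
      show "(s \<oplus>\<^bsub>?A\<^esub> t \<oplus>\<^bsub>?A\<^esub> z) x = (s \<oplus>\<^bsub>?A\<^esub> (t \<oplus>\<^bsub>?A\<^esub> z)) x"
        using x C[OF s x] C[OF t x] C[OF z x] by (simp add: sec_add a_assoc)
    qed (simp add: sec_add)
    show "s \<oplus>\<^bsub>?A\<^esub> t = t \<oplus>\<^bsub>?A\<^esub> s"
    proof (rule ext')
      fix x assume x: "x \<in> V"
      interpret cring "stalk S x" using cr x .
      show "(s \<oplus>\<^bsub>?A\<^esub> t) x = (t \<oplus>\<^bsub>?A\<^esub> s) x"
        using x C[OF s x] C[OF t x] by (simp add: sec_add a_comm)
    qed (simp add: sec_add)
    show "\<zero>\<^bsub>?A\<^esub> \<oplus>\<^bsub>?A\<^esub> s = s"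
    proof (rule ext')
      fix x assume x: "x \<in> V"
      interpret cring "stalk S x" using cr x .
      show "(\<zero>\<^bsub>?A\<^esub> \<oplus>\<^bsub>?A\<^esub> s) x = s x"
        using x C[OF s x] by (simp add: sec_add sec_zero)
    qed (simp add: sec_add Cu[OF s])
    show "\<exists>y\<in>carrier ?A. y \<oplus>\<^bsub>?A\<^esub> s = \<zero>\<^bsub>?A\<^esub>"
    proof (intro bexI)
      show "(\<lambda>x. if x \<in> V then \<ominus>\<^bsub>stalk S x\<^esub> s x else undefined) \<in> carrier ?A"
        by (rule neg_closed[OF s])
      show "(\<lambda>x. if x \<in> V then \<ominus>\<^bsub>stalk S x\<^esub> s x else undefined) \<oplus>\<^bsub>?A\<^esub> s = \<zero>\<^bsub>?A\<^esub>"
      proof (rule ext')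
        fix x assume x: "x \<in> V"
        interpret cring "stalk S x" using cr x .
        show "((\<lambda>x. if x \<in> V then \<ominus>\<^bsub>stalk S x\<^esub> s x else undefined) \<oplus>\<^bsub>?A\<^esub> s) x = \<zero>\<^bsub>?A\<^esub> x"
          using x C[OF s x] by (simp add: sec_add sec_zero l_neg)
      qed (simp add: sec_add sec_zero)
    qed
  next
    show "\<zero>\<^bsub>?A\<^esub> \<in> carrier ?A" by (rule zero_closed)
  qed
  have cm: "comm_monoid ?A"
  proof (rule comm_monoidI)
    fix s t z assume s: "s \<in> carrier ?A" and t: "t \<in> carrier ?A" and z: "z \<in> carrier ?A"
    show "s \<otimes>\<^bsub>?A\<^esub> t \<in> carrier ?A" by (rule mult_closed[OF s t])
    show "s \<otimes>\<^bsub>?A\<^esub> t \<otimes>\<^bsub>?A\<^esub> z = s \<otimes>\<^bsub>?A\<^esub> (t \<otimes>\<^bsub>?A\<^esub> z)"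
    proof (rule ext')
      fix x assume x: "x \<in> V"
      interpret cring "stalk S x" using cr x .
      show "(s \<otimes>\<^bsub>?A\<^esub> t \<otimes>\<^bsub>?A\<^esub> z) x = (s \<otimes>\<^bsub>?A\<^esub> (t \<otimes>\<^bsub>?A\<^esub> z)) x"
        using x C[OF s x] C[OF t x] C[OF z x] by (simp add: sec_mult m_assoc)
    qed (simp add: sec_mult)
    show "s \<otimes>\<^bsub>?A\<^esub> t = t \<otimes>\<^bsub>?A\<^esub> s"
    proof (rule ext')
      fix x assume x: "x \<in> V"
      interpret cring "stalk S x" using cr x .
      show "(s \<otimes>\<^bsub>?A\<^esub> t) x = (t \<otimes>\<^bsub>?A\<^esub> s) x"
        using x C[OF s x] C[OF t x] by (simp add: sec_mult m_comm)
    qed (simp add: sec_mult)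
    show "\<one>\<^bsub>?A\<^esub> \<otimes>\<^bsub>?A\<^esub> s = s"
    proof (rule ext')
      fix x assume x: "x \<in> V"
      interpret cring "stalk S x" using cr x .
      show "(\<one>\<^bsub>?A\<^esub> \<otimes>\<^bsub>?A\<^esub> s) x = s x"
        using x C[OF s x] by (simp add: sec_mult sec_one)
    qed (simp add: sec_mult Cu[OF s])
  next
    show "\<one>\<^bsub>?A\<^esub> \<in> carrier ?A" by (rule one_closed)
  qed
  show ?thesis
  proof (rule cringI[OF ag cm])
    fix s t z assume s: "s \<in> carrier ?A" and t: "t \<in> carrier ?A" and z: "z \<in> carrier ?A"
    show "(s \<oplus>\<^bsub>?A\<^esub> t) \<otimes>\<^bsub>?A\<^esub> z = s \<otimes>\<^bsub>?A\<^esub> z \<oplus>\<^bsub>?A\<^esub> t \<otimes>\<^bsub>?A\<^esub> z"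
    proof (rule ext')
      fix x assume x: "x \<in> V"
      interpret cring "stalk S x" using cr x .
      show "((s \<oplus>\<^bsub>?A\<^esub> t) \<otimes>\<^bsub>?A\<^esub> z) x = (s \<otimes>\<^bsub>?A\<^esub> z \<oplus>\<^bsub>?A\<^esub> t \<otimes>\<^bsub>?A\<^esub> z) x"
        using x C[OF s x] C[OF t x] C[OF z x] by (simp add: sec_mult sec_add l_distr)
    qed (simp add: sec_mult sec_add)
  qed
qed

lemma spec_notone: "P \<in> Spec R \<Longrightarrow> \<one>\<^bsub>R\<^esub> \<notin> P"
proof
  assume "P \<in> Spec R" "\<one>\<^bsub>R\<^esub> \<in> P"
  then interpret primeideal P R by (simp add: Spec_def)
  show False using \<open>\<one>\<^bsub>R\<^esub> \<in> P\<close> one_imp_carrier I_notcarr by simp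
qed

lemma spec_cring: "P \<in> Spec R \<Longrightarrow> cring R"
  unfolding Spec_def using primeideal.axioms(2) by blast

lemma zariski_topspace: "topspace (zariski R) = Spec R"
proof
  show "topspace (zariski R) \<subseteq> Spec R" unfolding zariski_def by auto
  show "Spec R \<subseteq> topspace (zariski R)"
  proof
    fix P assume P: "P \<in> Spec R"
    then have "\<one>\<^bsub>R\<^esub> \<in> carrier R" using spec_cring cring.axioms(1) ring.ring_simprules(6) by blast
    then have "{Q \<in> Spec R. \<one>\<^bsub>R\<^esub> \<notin> Q} \<in> {{Q \<in> Spec R. a \<notin> Q} | a. a \<in> carrier R}" by blast
    moreover have "P \<in> {Q \<in> Spec R. \<one>\<^bsub>R\<^esub> \<notin> Q}" using P spec_notone by blast
    ultimately show "P \<in> topspace (zariski R)" unfolding zariski_def by auto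
  qed
qed

lemma zariski_basic_open: "a \<in> carrier R \<Longrightarrow> openin (zariski R) {P \<in> Spec R. a \<notin> P}"
  unfolding zariski_def by (rule topology_generated_by_Basis) blast

lemma zariski_open_basic:
  assumes "openin (zariski R) G" "p \<in> G"
  shows "\<exists>a\<in>carrier R. p \<in> {P \<in> Spec R. a \<notin> P} \<and> {P \<in> Spec R. a \<notin> P} \<subseteq> G"
proof -
  have "generate_topology_on {{P \<in> Spec R. a \<notin> P} | a. a \<in> carrier R} G"
    using assms(1) unfolding zariski_def by (rule openin_topology_generated_by)
  then show ?thesis using assms(2)
  proof (induction arbitrary: p)
    case Empty then show ?case by simp
  next
    case (Int U W)
    then obtain a1 a2 where a1: "a1 \<in> carrier R" "p \<in> {P \<in> Spec R. a1 \<notin> P}" "{P \<in> Spec R. a1 \<notin> P} \<subseteq> U"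
      and a2: "a2 \<in> carrier R" "p \<in> {P \<in> Spec R. a2 \<notin> P}" "{P \<in> Spec R. a2 \<notin> P} \<subseteq> W"
      by (meson IntD1 IntD2)
    have pS: "p \<in> Spec R" using a1 by simp
    interpret cring R using spec_cring[OF pS] .
    have "a1 \<otimes>\<^bsub>R\<^esub> a2 \<in> carrier R" using a1 a2 by simp
    moreover have "p \<in> {P \<in> Spec R. a1 \<otimes>\<^bsub>R\<^esub> a2 \<notin> P}"
      using pS a1 a2 primeideal.I_prime[of p R a1 a2] unfolding Spec_def by auto
    moreover have "{P \<in> Spec R. a1 \<otimes>\<^bsub>R\<^esub> a2 \<notin> P} \<subseteq> U \<inter> W"
    proof
      fix P assume P: "P \<in> {P \<in> Spec R. a1 \<otimes>\<^bsub>R\<^esub> a2 \<notin> P}"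
      then interpret P: primeideal P R by (simp add: Spec_def)
      have "a1 \<notin> P" using P P.I_r_closed a2(1) by auto
      moreover have "a2 \<notin> P" using P P.I_l_closed a1(1) by auto
      ultimately show "P \<in> U \<inter> W" using P a1 a2 by auto
    qed
    ultimately show ?case by blast
  next
    case (UN K)
    then obtain k where "k \<in> K" "p \<in> k" by blast
    then show ?case using UN.IH by blast
  next
    case (Basis s)
    then show ?case by blast
  qed
qed

lemma pullback_cont:
  assumes A: "cring A" and B: "cring B" and h: "h \<in> ring_hom A B"
  shows "continuous_map (zariski B) (zariski A) (\<lambda>Q. {a \<in> carrier A. h a \<in> Q})"
  unfolding zariski_def continuous_on_generated_topo_iff
proof (intro conjI allI impI)
  fix U assume "U \<in> {{P \<in> Spec A. a \<notin> P} | a. a \<in> carrier A}"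
  then obtain a where a: "a \<in> carrier A" and U: "U = {P \<in> Spec A. a \<notin> P}" by blast
  have ha: "h a \<in> carrier B" using h a by (simp add: ring_hom_closed)
  have "(\<lambda>Q. {a \<in> carrier A. h a \<in> Q}) -` U \<inter> topspace (topology_generated_by {{P \<in> Spec B. b \<notin> P} | b. b \<in> carrier B})
        = {Q \<in> Spec B. h a \<notin> Q}"
    using zariski_topspace[of B] prime_pullback[OF A B h] a unfolding U zariski_def[symmetric]
    by (auto simp: Spec_def)
  then show "openin (topology_generated_by {{P \<in> Spec B. b \<notin> P} | b. b \<in> carrier B})
          ((\<lambda>Q. {a \<in> carrier A. h a \<in> Q}) -` U \<inter> topspace (topology_generated_by {{P \<in> Spec B. b \<notin> P} | b. b \<in> carrier B}))"
    using zariski_basic_open[OF ha] unfolding zariski_def by simp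
next
  show "(\<lambda>Q. {a \<in> carrier A. h a \<in> Q}) ` topspace (topology_generated_by {{P \<in> Spec B. a \<notin> P} | a. a \<in> carrier B})
     \<subseteq> \<Union> {{P \<in> Spec A. a \<notin> P} | a. a \<in> carrier A}"
    using zariski_topspace[of B] zariski_topspace[of A] prime_pullback[OF A B h]
    unfolding zariski_def by (auto simp: Spec_def)
qed

lemma space_open:
  "openin (space_topology S) V \<longleftrightarrow> V \<subseteq> pts S \<and> (\<forall>x\<in>V. \<forall>y\<in>pts S. leq S x y \<longrightarrow> y \<in> V)"
proof -
  have "istopology (\<lambda>V. V \<subseteq> pts S \<and> (\<forall>x\<in>V. \<forall>y\<in>pts S. leq S x y \<longrightarrow> y \<in> V))"
    unfolding istopology_def by blast
  then show ?thesis unfolding space_topology_def by simp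
qed

lemma space_topspace: "topspace (space_topology S) = pts S"
proof
  show "topspace (space_topology S) \<subseteq> pts S" unfolding topspace_def space_open by blast
  have "openin (space_topology S) (pts S)" unfolding space_open by blast
  then show "pts S \<subseteq> topspace (space_topology S)" by (rule openin_subset)
qed

lemma ev_hom:
  assumes fr: "finite_ringed_space S" and x: "x \<in> pts S"
  shows "(\<lambda>s. s x) \<in> ring_hom (sections S (pts S)) (stalk S x)"
proof (rule ring_hom_memI)
  fix s t assume s: "s \<in> carrier (sections S (pts S))" and t: "t \<in> carrier (sections S (pts S))"
  show "s x \<in> carrier (stalk S x)" using s x by (simp add: sec_carrier)
  show "(s \<otimes>\<^bsub>sections S (pts S)\<^esub> t) x = s x \<otimes>\<^bsub>stalk S x\<^esub> t x" using x by (simp add: sec_mult)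
  show "(s \<oplus>\<^bsub>sections S (pts S)\<^esub> t) x = s x \<oplus>\<^bsub>stalk S x\<^esub> t x" using x by (simp add: sec_add)
next
  show "\<one>\<^bsub>sections S (pts S)\<^esub> x = \<one>\<^bsub>stalk S x\<^esub>" using x by (simp add: sec_one)
qed

definition phi :: "('a, 'r) ringed_poset \<Rightarrow> 'a \<Rightarrow> 'r set \<Rightarrow> ('a \<Rightarrow> 'r) set" where
  "phi S x Q = {s \<in> carrier (sections S (pts S)). s x \<in> Q}"

lemma phi_spec:
  assumes fr: "finite_ringed_space S" and x: "x \<in> pts S" and Q: "Q \<in> Spec (stalk S x)"
  shows "phi S x Q \<in> Spec (sections S (pts S))"
  using prime_pullback[OF sections_cring[OF fr order.refl] frs_cring[OF fr x] ev_hom[OF fr x]] Q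
  unfolding Spec_def phi_def by simp

lemma phi_cont:
  assumes fr: "finite_ringed_space S" and x: "x \<in> pts S"
  shows "continuous_map (zariski (stalk S x)) (zariski (sections S (pts S))) (phi S x)"
proof -
  have "phi S x = (\<lambda>Q. {s \<in> carrier (sections S (pts S)). s x \<in> Q})" unfolding phi_def by (rule ext) simp
  then show ?thesis
    using pullback_cont[OF sections_cring[OF fr order.refl] frs_cring[OF fr x] ev_hom[OF fr x]] by simp
qed

lemma phi_mono:
  assumes fr: "finite_ringed_space S" and x: "x \<in> pts S" and y: "y \<in> pts S" and xy: "leq S x y"
    and Q: "Q \<in> Spec (stalk S y)"
  shows "\<exists>Q'\<in>Spec (stalk S x). phi S y Q = phi S x Q'"
proof
  let ?Q' = "{a \<in> carrier (stalk S x). rmap S x y a \<in> Q}"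
  show "?Q' \<in> Spec (stalk S x)"
    using prime_pullback[OF frs_cring[OF fr x] frs_cring[OF fr y] frs_hom[OF fr x y xy]] Q
    unfolding Spec_def by simp
  show "phi S y Q = phi S x ?Q'"
    unfolding phi_def using x y xy by (auto simp: sec_carrier)
qed

lemma prime_pow:
  assumes "primeideal P R" "a \<in> carrier R" "a [^]\<^bsub>R\<^esub> (n::nat) \<in> P"
  shows "a \<in> P"
  using assms(3)
proof (induction n)
  case 0
  interpret primeideal P R by fact
  show ?case using 0 one_imp_carrier I_notcarr by simp
next
  case (Suc n)
  interpret primeideal P R by fact
  have "a [^]\<^bsub>R\<^esub> n \<otimes>\<^bsub>R\<^esub> a \<in> P" using Suc.prems by simp
  then have "a [^]\<^bsub>R\<^esub> n \<in> P \<or> a \<in> P" using I_prime assms(2) by simp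
  then show ?case using Suc.IH by blast
qed

lemma images_dense:
  assumes fr: "finite_ringed_space S" and G: "openin (zariski (sections S (pts S))) G" and p: "p \<in> G"
  shows "\<exists>x\<in>pts S. \<exists>Q\<in>Spec (stalk S x). phi S x Q \<in> G"
proof -
  let ?A = "sections S (pts S)"
  interpret A: cring ?A using sections_cring[OF fr order.refl] .
  obtain a where a: "a \<in> carrier ?A" and pa: "p \<in> {P \<in> Spec ?A. a \<notin> P}" and aG: "{P \<in> Spec ?A. a \<notin> P} \<subseteq> G"
    using zariski_open_basic[OF G p] by blast
  have "\<exists>x\<in>pts S. \<forall>n::nat. a x [^]\<^bsub>stalk S x\<^esub> n \<noteq> \<zero>\<^bsub>stalk S x\<^esub>"
  proof (rule ccontr)
    assume "\<not> ?thesis"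
    then have "\<forall>x\<in>pts S. \<exists>n::nat. a x [^]\<^bsub>stalk S x\<^esub> n = \<zero>\<^bsub>stalk S x\<^esub>" by blast
    then obtain nn where nn: "\<And>x. x \<in> pts S \<Longrightarrow> a x [^]\<^bsub>stalk S x\<^esub> (nn x :: nat) = \<zero>\<^bsub>stalk S x\<^esub>" by metis
    define N where "N = (\<Sum>x\<in>pts S. nn x)"
    have z: "a x [^]\<^bsub>stalk S x\<^esub> N = \<zero>\<^bsub>stalk S x\<^esub>" if x: "x \<in> pts S" for x
    proof -
      interpret X: cring "stalk S x" using frs_cring[OF fr x] .
      have ax: "a x \<in> carrier (stalk S x)" using a x by (simp add: sec_carrier)
      have "nn x \<le> N" unfolding N_def by (rule member_le_sum[OF x _ frs_finite[OF fr]]) simp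
      then obtain k where "N = nn x + k" using le_Suc_ex by blast
      then have "a x [^]\<^bsub>stalk S x\<^esub> N = a x [^]\<^bsub>stalk S x\<^esub> nn x \<otimes>\<^bsub>stalk S x\<^esub> a x [^]\<^bsub>stalk S x\<^esub> k"
        using ax by (simp add: X.nat_pow_mult)
      also have "\<dots> = \<zero>\<^bsub>stalk S x\<^esub>" using nn[OF x] ax by simp
      finally show ?thesis .
    qed
    have "a [^]\<^bsub>?A\<^esub> N = \<zero>\<^bsub>?A\<^esub>"
    proof (rule ext)
      fix x show "(a [^]\<^bsub>?A\<^esub> N) x = \<zero>\<^bsub>?A\<^esub> x"
      proof (cases "x \<in> pts S")
        case True
        interpret h: ring_hom_ring ?A "stalk S x" "\<lambda>s. s x"
          by (rule ring_hom_ringI2[OF cring.axioms(1)[OF sections_cring[OF fr order.refl]]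
               cring.axioms(1)[OF frs_cring[OF fr True]] ev_hom[OF fr True]])
        show ?thesis using h.hom_nat_pow[OF a, of N] z[OF True] True by (simp add: sec_zero)
      next
        case False
        have "a [^]\<^bsub>?A\<^esub> N \<in> carrier ?A" using a by simp
        then show ?thesis using False by (simp add: sec_carrier sec_zero)
      qed
    qed
    moreover have "\<zero>\<^bsub>?A\<^esub> \<in> p" using pa unfolding Spec_def
      by (simp add: additive_subgroup.zero_closed ideal.axioms(1) primeideal.axioms(1))
    ultimately have "a \<in> p" using prime_pow[of p ?A a N] pa a unfolding Spec_def by simp
    then show False using pa by simp
  qed
  then obtain x where x: "x \<in> pts S" and nil: "\<And>n::nat. a x [^]\<^bsub>stalk S x\<^esub> n \<noteq> \<zero>\<^bsub>stalk S x\<^esub>" by blast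
  have ax: "a x \<in> carrier (stalk S x)" using a x by (simp add: sec_carrier)
  obtain Q where Q: "primeideal Q (stalk S x)" "a x \<notin> Q"
    using exists_prime_avoiding[OF frs_cring[OF fr x] ax nil] by blast
  have "phi S x Q \<in> Spec ?A" using phi_spec[OF fr x] Q by (simp add: Spec_def)
  moreover have "a \<notin> phi S x Q" using Q unfolding phi_def by simp
  ultimately have "phi S x Q \<in> G" using aG by blast
  then show ?thesis using x Q by (auto simp: Spec_def)
qed

lemma spec_zero: "P \<in> Spec R \<Longrightarrow> \<zero>\<^bsub>R\<^esub> \<in> P"
  unfolding Spec_def by (simp add: additive_subgroup.zero_closed ideal.axioms(1) primeideal.axioms(1))

lemma spec_add: "P \<in> Spec R \<Longrightarrow> a \<in> P \<Longrightarrow> b \<in> P \<Longrightarrow> a \<oplus>\<^bsub>R\<^esub> b \<in> P"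
  unfolding Spec_def by (simp add: additive_subgroup.a_closed ideal.axioms(1) primeideal.axioms(1))

lemma spec_prime: "P \<in> Spec R \<Longrightarrow> a \<in> carrier R \<Longrightarrow> b \<in> carrier R \<Longrightarrow> a \<otimes>\<^bsub>R\<^esub> b \<in> P \<Longrightarrow> a \<in> P \<or> b \<in> P"
  unfolding Spec_def by (simp add: primeideal.I_prime)

lemma clopen_sec:
  assumes fr: "finite_ringed_space S" and E: "E \<subseteq> pts S"
    and up: "\<And>x y. x \<in> E \<Longrightarrow> y \<in> pts S \<Longrightarrow> leq S x y \<Longrightarrow> y \<in> E"
    and up': "\<And>x y. x \<in> pts S \<Longrightarrow> x \<notin> E \<Longrightarrow> y \<in> pts S \<Longrightarrow> leq S x y \<Longrightarrow> y \<notin> E"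
  shows "(\<lambda>x. if x \<in> E then \<one>\<^bsub>stalk S x\<^esub> else if x \<in> pts S then \<zero>\<^bsub>stalk S x\<^esub> else undefined)
         \<in> carrier (sections S (pts S))"
  unfolding sec_carrier
proof (intro conjI ballI allI impI)
  fix x assume x: "x \<in> pts S"
  interpret cring "stalk S x" using frs_cring[OF fr x] .
  show "(if x \<in> E then \<one>\<^bsub>stalk S x\<^esub> else if x \<in> pts S then \<zero>\<^bsub>stalk S x\<^esub> else undefined) \<in> carrier (stalk S x)"
    using x by simp
next
  fix x y assume x: "x \<in> pts S" and y: "y \<in> pts S" and xy: "leq S x y"
  have h: "rmap S x y \<in> ring_hom (stalk S x) (stalk S y)" by (rule frs_hom[OF fr x y xy])
  have R: "ring (stalk S x)" "ring (stalk S y)"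
    using frs_cring[OF fr x] frs_cring[OF fr y] cring.axioms(1) by auto
  show "rmap S x y (if x \<in> E then \<one>\<^bsub>stalk S x\<^esub> else if x \<in> pts S then \<zero>\<^bsub>stalk S x\<^esub> else undefined) =
        (if y \<in> E then \<one>\<^bsub>stalk S y\<^esub> else if y \<in> pts S then \<zero>\<^bsub>stalk S y\<^esub> else undefined)"
  proof (cases "x \<in> E")
    case True
    then show ?thesis using up[OF True y xy] ring_hom_one[OF h] by simp
  next
    case False
    then show ?thesis using up'[OF x False y xy] ring_hom_zero[OF h R] x y by simp
  qed
next
  fix x assume "x \<notin> pts S" then show "(if x \<in> E then \<one>\<^bsub>stalk S x\<^esub> else if x \<in> pts S then \<zero>\<^bsub>stalk S x\<^esub> else undefined) = undefined"
    using E by auto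
qed

theorem proposition2p2:
  fixes S :: "('a, 'r) ringed_poset"
  assumes "finite_space S" and "schematic S"
  shows "well_connected S \<longleftrightarrow> top_connected S \<and> pw_connected S"
proof -
  have fr: "finite_ringed_space S" using assms(1) unfolding finite_space_def by simp
  let ?A = "sections S (pts S)"
  interpret A: cring ?A using sections_cring[OF fr order.refl] .
  have pwne: "Spec (stalk S x) \<noteq> {}" if "pw_connected S" "x \<in> pts S" for x
    using that unfolding pw_connected_def spec_connected_def by blast
  show ?thesis
  proof
    assume wc: "well_connected S"
    then have pw: "pw_connected S" and cr: "spec_connected ?A"
      unfolding well_connected_def connected_rs_def by auto
    have ne: "pts S \<noteq> {}"
    proof
      assume e: "pts S = {}"
      obtain p where p: "p \<in> Spec ?A" using cr unfolding spec_connected_def by blast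
      have "\<one>\<^bsub>?A\<^esub> = \<zero>\<^bsub>?A\<^esub>" using e by (simp add: sec_one sec_zero)
      then show False using spec_zero[OF p] spec_notone[OF p] by simp
    qed
    have conn: "connected_space (space_topology S)"
    proof (rule ccontr)
      assume "\<not> connected_space (space_topology S)"
      then obtain E1 E2 where o1: "openin (space_topology S) E1" and o2: "openin (space_topology S) E2"
        and cov: "topspace (space_topology S) \<subseteq> E1 \<union> E2" and dis: "E1 \<inter> E2 = {}"
        and n1: "E1 \<noteq> {}" and n2: "E2 \<noteq> {}"
        unfolding connected_space_def by blast
      have E1: "E1 \<subseteq> pts S" "\<And>x y. x \<in> E1 \<Longrightarrow> y \<in> pts S \<Longrightarrow> leq S x y \<Longrightarrow> y \<in> E1"
        using o1 unfolding space_open by auto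
      have E2: "E2 \<subseteq> pts S" "\<And>x y. x \<in> E2 \<Longrightarrow> y \<in> pts S \<Longrightarrow> leq S x y \<Longrightarrow> y \<in> E2"
        using o2 unfolding space_open by auto
      have cov': "pts S \<subseteq> E1 \<union> E2" using cov space_topspace by metis
      define e where "e E = (\<lambda>x. if x \<in> E then \<one>\<^bsub>stalk S x\<^esub> else if x \<in> pts S then \<zero>\<^bsub>stalk S x\<^esub> else undefined)"
        for E
      have sw1: "y \<notin> E1" if "x \<in> pts S" "x \<notin> E1" "y \<in> pts S" "leq S x y" for x y
      proof -
        have "x \<in> E2" using that cov' by blast
        then have "y \<in> E2" using E2(2) that by blast
        then show ?thesis using dis by blast
      qed
      have sw2: "y \<notin> E2" if "x \<in> pts S" "x \<notin> E2" "y \<in> pts S" "leq S x y" for x y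
      proof -
        have "x \<in> E1" using that cov' by blast
        then have "y \<in> E1" using E1(2) that by blast
        then show ?thesis using dis by blast
      qed
      have e1: "e E1 \<in> carrier ?A" unfolding e_def
        by (rule clopen_sec[OF fr E1(1) E1(2) sw1])
      have e2: "e E2 \<in> carrier ?A" unfolding e_def
        by (rule clopen_sec[OF fr E2(1) E2(2) sw2])
      have prod: "e E1 \<otimes>\<^bsub>?A\<^esub> e E2 = \<zero>\<^bsub>?A\<^esub>"
      proof (rule ext)
        fix x show "(e E1 \<otimes>\<^bsub>?A\<^esub> e E2) x = \<zero>\<^bsub>?A\<^esub> x"
        proof (cases "x \<in> pts S")
          case True
          interpret cring "stalk S x" using frs_cring[OF fr True] .
          show ?thesis using True dis by (auto simp: sec_mult sec_zero e_def)
        qed (simp add: sec_mult sec_zero)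
      qed
      have sum: "e E1 \<oplus>\<^bsub>?A\<^esub> e E2 = \<one>\<^bsub>?A\<^esub>"
      proof (rule ext)
        fix x show "(e E1 \<oplus>\<^bsub>?A\<^esub> e E2) x = \<one>\<^bsub>?A\<^esub> x"
        proof (cases "x \<in> pts S")
          case True
          interpret cring "stalk S x" using frs_cring[OF fr True] .
          show ?thesis using True dis cov' by (auto simp: sec_add sec_one e_def)
        qed (simp add: sec_add sec_one)
      qed
      obtain x1 where x1: "x1 \<in> E1" using n1 by blast
      obtain x2 where x2: "x2 \<in> E2" using n2 by blast
      obtain Q1 where Q1: "Q1 \<in> Spec (stalk S x1)" using pwne[OF pw] x1 E1(1) by blast
      obtain Q2 where Q2: "Q2 \<in> Spec (stalk S x2)" using pwne[OF pw] x2 E2(1) by blast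
      have p1: "phi S x1 Q1 \<in> Spec ?A" using phi_spec[OF fr _ Q1] x1 E1(1) by blast
      have p2: "phi S x2 Q2 \<in> Spec ?A" using phi_spec[OF fr _ Q2] x2 E2(1) by blast
      have ep1: "e E1 \<notin> phi S x1 Q1" using spec_notone[OF Q1] x1 unfolding phi_def e_def by simp
      have ep2: "e E2 \<notin> phi S x2 Q2" using spec_notone[OF Q2] x2 unfolding phi_def e_def by simp
      have "\<not> connected_space (zariski ?A)"
        unfolding connected_space_def not_not
      proof (intro exI conjI)
        show "openin (zariski ?A) {P \<in> Spec ?A. e E1 \<notin> P}" by (rule zariski_basic_open[OF e1])
        show "openin (zariski ?A) {P \<in> Spec ?A. e E2 \<notin> P}" by (rule zariski_basic_open[OF e2])
        show "topspace (zariski ?A) \<subseteq> {P \<in> Spec ?A. e E1 \<notin> P} \<union> {P \<in> Spec ?A. e E2 \<notin> P}"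
        proof
          fix p assume "p \<in> topspace (zariski ?A)"
          then have p: "p \<in> Spec ?A" by (simp add: zariski_topspace)
          show "p \<in> {P \<in> Spec ?A. e E1 \<notin> P} \<union> {P \<in> Spec ?A. e E2 \<notin> P}"
          proof (rule ccontr)
            assume "\<not> ?thesis"
            then have "e E1 \<in> p" "e E2 \<in> p" using p by auto
            then have "\<one>\<^bsub>?A\<^esub> \<in> p" using spec_add[OF p] sum by metis
            then show False using spec_notone[OF p] by simp
          qed
        qed
        show "{P \<in> Spec ?A. e E1 \<notin> P} \<inter> {P \<in> Spec ?A. e E2 \<notin> P} = {}"
        proof (rule ccontr)
          assume "\<not> ?thesis"
          then obtain p where p: "p \<in> Spec ?A" "e E1 \<notin> p" "e E2 \<notin> p" by blast
          have "e E1 \<otimes>\<^bsub>?A\<^esub> e E2 \<in> p" using prod spec_zero[OF p(1)] by simp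
          then show False using spec_prime[OF p(1) e1 e2] p by blast
        qed
        show "{P \<in> Spec ?A. e E1 \<notin> P} \<noteq> {}" using p1 ep1 by blast
        show "{P \<in> Spec ?A. e E2 \<notin> P} \<noteq> {}" using p2 ep2 by blast
      qed
      then show False using cr unfolding spec_connected_def by blast
    qed
    show "top_connected S \<and> pw_connected S"
      using ne conn pw unfolding top_connected_def by blast
  next
    assume "top_connected S \<and> pw_connected S"
    then have tc: "pts S \<noteq> {}" "connected_space (space_topology S)" and pw: "pw_connected S"
      unfolding top_connected_def by auto
    have sc: "spec_connected (stalk S x)" if "x \<in> pts S" for x using pw that unfolding pw_connected_def by blast
    obtain x0 where x0: "x0 \<in> pts S" using tc(1) by blast
    obtain Q0 where Q0: "Q0 \<in> Spec (stalk S x0)" using pwne[OF pw x0] by blast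
    have specne: "Spec ?A \<noteq> {}" using phi_spec[OF fr x0 Q0] by blast
    have "connected_space (zariski ?A)"
    proof (rule ccontr)
      assume "\<not> connected_space (zariski ?A)"
      then obtain U1 U2 where o1: "openin (zariski ?A) U1" and o2: "openin (zariski ?A) U2"
        and cov: "topspace (zariski ?A) \<subseteq> U1 \<union> U2" and dis: "U1 \<inter> U2 = {}"
        and n1: "U1 \<noteq> {}" and n2: "U2 \<noteq> {}"
        unfolding connected_space_def by blast
      have cov': "Spec ?A \<subseteq> U1 \<union> U2" using cov by (simp add: zariski_topspace)
      have side: "(\<forall>Q\<in>Spec (stalk S x). phi S x Q \<in> U1) \<or> (\<forall>Q\<in>Spec (stalk S x). phi S x Q \<in> U2)"
        if x: "x \<in> pts S" for x
      proof -
        have cm: "continuous_map (zariski (stalk S x)) (zariski ?A) (phi S x)" by (rule phi_cont[OF fr x])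
        let ?W1 = "{Q \<in> topspace (zariski (stalk S x)). phi S x Q \<in> U1}"
        let ?W2 = "{Q \<in> topspace (zariski (stalk S x)). phi S x Q \<in> U2}"
        have w1: "openin (zariski (stalk S x)) ?W1" using cm o1 unfolding continuous_map_def by blast
        have w2: "openin (zariski (stalk S x)) ?W2" using cm o2 unfolding continuous_map_def by blast
        have wc: "topspace (zariski (stalk S x)) \<subseteq> ?W1 \<union> ?W2"
          using phi_spec[OF fr x] cov' by (auto simp: zariski_topspace)
        have wd: "?W1 \<inter> ?W2 = {}" using dis by blast
        have "?W1 = {} \<or> ?W2 = {}"
          using sc[OF x] w1 w2 wc wd unfolding spec_connected_def connected_space_def by blast
        then show ?thesis using zariski_topspace[of "stalk S x"] wc by blast
      qed
      define E1 where "E1 = {x \<in> pts S. \<forall>Q\<in>Spec (stalk S x). phi S x Q \<in> U1}"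
      define E2 where "E2 = {x \<in> pts S. \<forall>Q\<in>Spec (stalk S x). phi S x Q \<in> U2}"
      have up: "y \<in> E" if "E = {x \<in> pts S. \<forall>Q\<in>Spec (stalk S x). phi S x Q \<in> U}" "x \<in> E" "y \<in> pts S" "leq S x y"
        for E U x y
      proof -
        have x: "x \<in> pts S" using that by simp
        have "phi S y Q \<in> U" if Q: "Q \<in> Spec (stalk S y)" for Q
        proof -
          obtain Q' where "Q' \<in> Spec (stalk S x)" "phi S y Q = phi S x Q'"
            using phi_mono[OF fr x \<open>y \<in> pts S\<close> \<open>leq S x y\<close> Q] by blast
          then show ?thesis using \<open>x \<in> E\<close> \<open>E = _\<close> by auto
        qed
        then show ?thesis using that by auto
      qed
      have oE1: "openin (space_topology S) E1" unfolding space_open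
        using up[OF E1_def] E1_def by blast
      have oE2: "openin (space_topology S) E2" unfolding space_open
        using up[OF E2_def] E2_def by blast
      have cE: "topspace (space_topology S) \<subseteq> E1 \<union> E2"
        using side unfolding space_topspace E1_def E2_def by blast
      have dE: "E1 \<inter> E2 = {}"
      proof (rule ccontr)
        assume "E1 \<inter> E2 \<noteq> {}"
        then obtain x where x: "x \<in> E1" "x \<in> E2" by blast
        then have xp: "x \<in> pts S" unfolding E1_def by simp
        obtain Q where Q: "Q \<in> Spec (stalk S x)" using pwne[OF pw xp] by blast
        then show False using x dis unfolding E1_def E2_def by blast
      qed
      have "E1 = {} \<or> E2 = {}"
        using tc(2) oE1 oE2 cE dE unfolding connected_space_def by blast
      then show False
      proof
        assume "E1 = {}"
        then have all2: "\<And>x. x \<in> pts S \<Longrightarrow> \<forall>Q\<in>Spec (stalk S x). phi S x Q \<in> U2"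
          using cE unfolding space_topspace E2_def by blast
        obtain p where "p \<in> U1" using n1 by blast
        then obtain x Q where "x \<in> pts S" "Q \<in> Spec (stalk S x)" "phi S x Q \<in> U1"
          using images_dense[OF fr o1] by blast
        then show False using all2 dis by blast
      next
        assume "E2 = {}"
        then have all1: "\<And>x. x \<in> pts S \<Longrightarrow> \<forall>Q\<in>Spec (stalk S x). phi S x Q \<in> U1"
          using cE unfolding space_topspace E1_def by blast
        obtain p where "p \<in> U2" using n2 by blast
        then obtain x Q where "x \<in> pts S" "Q \<in> Spec (stalk S x)" "phi S x Q \<in> U2"
          using images_dense[OF fr o2] by blast
        then show False using all1 dis by blast
      qed
    qed
    then show "well_connected S"
      using pw specne unfolding well_connected_def connected_rs_def spec_connected_def by blast
  qed
qed

end
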